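(* Let $C$ be a cycle graph. If $u$ and $v$ are non-adjacent vertices of $C$, then there exists a u-switch $\tau$ over $C$ such that $uv\in E(\tau(C))$.
   Context: Graphs are finite, simple, undirected, labeled. A unicyclic graph is a connected graph with exactly one cycle. For vertices $a,b,c,d$, $A=\binom{a\ b}{c\ d}$ is interchangeable in $G$ if $ab,cd\in E(G)$, $\{a,b\}\cap\{c,d\}=\varnothing$, $ac,bd\notin E(G)$; the 2-switch $\tau_A$ sends $G$ to $G-ab-cd+ac+bd$ if $A$ is interchangeable and to $G$ otherwise (trivial). A nontrivial 2-switch $\tau$ over a unicyclic $U$ is a u-switch if $\tau(U)$ is unicyclic. *)

theory Defs
  imports Main
begin

definition graph :: "'a set \<Rightarrow> 'a set set \<Rightarrow> bool" where
  "graph V E \<longleftrightarrow> finite V \<and> (\<forall>e\<in>E. \<exists>x y. x \<noteq> y \<and> e = {x, y} \<and> x \<in> V \<and> y \<in> V)"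

definition adj :: "'a set set \<Rightarrow> 'a \<Rightarrow> 'a \<Rightarrow> bool" where
  "adj E x y \<longleftrightarrow> {x, y} \<in> E"

definition connected :: "'a set \<Rightarrow> 'a set set \<Rightarrow> bool" where
  "connected V E \<longleftrightarrow> V \<noteq> {} \<and> (\<forall>x\<in>V. \<forall>y\<in>V. (adj E)\<^sup>*\<^sup>* x y)"

definition degree :: "'a set set \<Rightarrow> 'a \<Rightarrow> nat" where
  "degree E x = card {e \<in> E. x \<in> e}"

definition cycle_graph :: "'a set \<Rightarrow> 'a set set \<Rightarrow> bool" where
  "cycle_graph V E \<longleftrightarrow> graph V E \<and> connected V E \<and> (\<forall>x\<in>V. degree E x = 2)"

definition is_cycle :: "'a set \<Rightarrow> 'a set set \<Rightarrow> 'a set set \<Rightarrow> bool" where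
  "is_cycle V E C \<longleftrightarrow> C \<subseteq> E \<and> C \<noteq> {} \<and> cycle_graph (\<Union>C) C"

definition unicyclic :: "'a set \<Rightarrow> 'a set set \<Rightarrow> bool" where
  "unicyclic V E \<longleftrightarrow> graph V E \<and> connected V E \<and> (\<exists>!C. is_cycle V E C)"

definition interchangeable :: "'a set set \<Rightarrow> 'a \<Rightarrow> 'a \<Rightarrow> 'a \<Rightarrow> 'a \<Rightarrow> bool" where
  "interchangeable E a b c d \<longleftrightarrow>
     {a, b} \<in> E \<and> {c, d} \<in> E \<and> {a, b} \<inter> {c, d} = {} \<and> {a, c} \<notin> E \<and> {b, d} \<notin> E"

definition two_switch :: "'a set set \<Rightarrow> 'a \<Rightarrow> 'a \<Rightarrow> 'a \<Rightarrow> 'a \<Rightarrow> 'a set set" where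
  "two_switch E a b c d =
     (if interchangeable E a b c d
      then (E - {{a, b}, {c, d}}) \<union> {{a, c}, {b, d}}
      else E)"

definition u_switch :: "'a set \<Rightarrow> 'a set set \<Rightarrow> 'a \<Rightarrow> 'a \<Rightarrow> 'a \<Rightarrow> 'a \<Rightarrow> bool" where
  "u_switch V E a b c d \<longleftrightarrow>
     unicyclic V E \<and> two_switch E a b c d \<noteq> E \<and> unicyclic V (two_switch E a b c d)"

end

theory Submission
  imports Defs
begin


lemma adj_sym: "adj E x y = adj E y x"
  by (simp add: adj_def insert_commute)

lemma rtr_sym:
  assumes "\<And>a b. r a b \<Longrightarrow> r b a" and "r\<^sup>*\<^sup>* x y"
  shows "r\<^sup>*\<^sup>* y x"
  using assms(2)
proof (induction rule: rtranclp_induct)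
  case base then show ?case by simp
next
  case (step y z)
  then show ?case using assms(1) by (meson converse_rtranclp_into_rtranclp)
qed

lemma graph_edgeE:
  assumes "graph V E" "e \<in> E"
  obtains x y where "x \<noteq> y" "e = {x, y}" "x \<in> V" "y \<in> V"
  using assms unfolding graph_def by blast

lemma graph_finE: "graph V E \<Longrightarrow> finite E"
proof -
  assume g: "graph V E"
  have "E \<subseteq> Pow V"
  proof
    fix e assume "e \<in> E"
    then obtain x y where "e = {x, y}" "x \<in> V" "y \<in> V" using g graph_edgeE by metis
    then show "e \<in> Pow V" by simp
  qed
  moreover have "finite (Pow V)" using g unfolding graph_def by simp
  ultimately show ?thesis by (rule finite_subset)
qed

lemma edge_ne: "graph V E \<Longrightarrow> {x, y} \<in> E \<Longrightarrow> x \<noteq> y \<and> x \<in> V \<and> y \<in> V"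
  unfolding graph_def by (metis doubleton_eq_iff)

definition nb :: "'a set set \<Rightarrow> 'a \<Rightarrow> 'a set" where
  "nb E c = {y. {c, y} \<in> E}"

lemma nb_card:
  assumes cg: "cycle_graph V E" and x: "x \<in> V"
  shows "card (nb E x) = 2"
proof -
  have g: "graph V E" using cg by (simp add: cycle_graph_def)
  have "bij_betw (\<lambda>y. {x, y}) (nb E x) {e \<in> E. x \<in> e}"
  proof (rule bij_betwI')
    show "\<And>y z. y \<in> nb E x \<Longrightarrow> z \<in> nb E x \<Longrightarrow> ({x, y} = {x, z}) = (y = z)"
      by (auto simp: doubleton_eq_iff)
    show "\<And>y. y \<in> nb E x \<Longrightarrow> {x, y} \<in> {e \<in> E. x \<in> e}" by (simp add: nb_def)
    show "\<exists>y\<in>nb E x. e = {x, y}" if "e \<in> {e \<in> E. x \<in> e}" for e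
    proof -
      have eE: "e \<in> E" using that by simp
      obtain p q where "p \<noteq> q" "e = {p, q}" "p \<in> V" "q \<in> V" using g eE by (rule graph_edgeE)
      have xe: "x = p \<or> x = q" using that \<open>e = {p, q}\<close> by blast
      show ?thesis
      proof (cases "x = p")
        case True
        then have "q \<in> nb E x" "e = {x, q}" using that \<open>e = {p, q}\<close> unfolding nb_def by auto
        then show ?thesis by blast
      next
        case False
        then have "x = q" using xe by blast
        then have "e = {x, p}" using \<open>e = {p, q}\<close> by (simp add: insert_commute)
        then have "p \<in> nb E x" "e = {x, p}" using that unfolding nb_def by auto
        then show ?thesis by blast
      qed
    qed
  qed
  then have "card (nb E x) = degree E x" unfolding degree_def by (rule bij_betw_same_card)
  then show ?thesis using cg x by (simp add: cycle_graph_def)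
qed

lemma cyc_unicyclic:
  assumes cg: "cycle_graph V E" shows "unicyclic V E"
proof -
  have g: "graph V E" and con: "connected V E" and deg: "\<forall>x\<in>V. degree E x = 2"
    using cg by (auto simp: cycle_graph_def)
  have finE: "finite E" using g by (rule graph_finE)
  have UE: "\<Union>E = V"
  proof
    show "\<Union>E \<subseteq> V"
    proof
      fix x assume "x \<in> \<Union>E"
      then obtain e where "e \<in> E" "x \<in> e" by blast
      then show "x \<in> V" using g graph_edgeE by (metis insertE singletonD)
    qed
    show "V \<subseteq> \<Union>E"
    proof
      fix x assume "x \<in> V"
      then have "card {e\<in>E. x\<in>e} = 2" using deg by (simp add: degree_def)
      then have "{e\<in>E. x\<in>e} \<noteq> {}" by (metis card.empty zero_neq_numeral)
      then show "x \<in> \<Union>E" by blast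
    qed
  qed
  have Ene: "E \<noteq> {}" using con UE unfolding connected_def by auto
  have cycE: "is_cycle V E E" unfolding is_cycle_def using Ene cg UE by simp
  have uniq: "C = E" if cC: "is_cycle V E C" for C
  proof -
    let ?W = "\<Union>C"
    have CE: "C \<subseteq> E" and Cne: "C \<noteq> {}" and cgC: "cycle_graph ?W C"
      using cC by (auto simp: is_cycle_def)
    have degC: "\<forall>x\<in>?W. degree C x = 2" using cgC by (simp add: cycle_graph_def)
    have WV: "?W \<subseteq> V" using CE UE by blast
    have loc: "{e\<in>E. x\<in>e} = {e\<in>C. x\<in>e}" if xw: "x \<in> ?W" for x
    proof -
      have "{e\<in>C. x\<in>e} \<subseteq> {e\<in>E. x\<in>e}" using CE by blast
      moreover have "finite {e\<in>E. x\<in>e}" using finE by simp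
      moreover have "card {e\<in>C. x\<in>e} = card {e\<in>E. x\<in>e}"
      proof -
        have "degree C x = 2" using degC xw by blast
        moreover have "degree E x = 2" using deg WV xw by blast
        ultimately show ?thesis unfolding degree_def by simp
      qed
      ultimately show ?thesis by (metis card_subset_eq)
    qed
    obtain e0 where e0: "e0 \<in> C" using Cne by blast
    then obtain p q where "e0 = {p, q}" using CE g graph_edgeE by (metis subsetD)
    then have x0: "p \<in> ?W" using e0 by blast
    have reach: "y \<in> ?W" if "(adj E)\<^sup>*\<^sup>* p y" for y
      using that
    proof (induction rule: rtranclp_induct)
      case base then show ?case using x0 .
    next
      case (step y z)
      then have "{y, z} \<in> {e\<in>E. y\<in>e}" by (simp add: adj_def)
      then have "{y, z} \<in> C" using loc[OF step.IH] by blast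
      moreover have "z \<in> {y, z}" by simp
      ultimately show ?case by (rule UnionI)
    qed
    have VW: "V \<subseteq> ?W"
    proof
      fix y assume "y \<in> V"
      moreover have "p \<in> V" using x0 WV by blast
      ultimately have "(adj E)\<^sup>*\<^sup>* p y" using con by (simp add: connected_def)
      then show "y \<in> ?W" by (rule reach)
    qed
    show "C = E"
    proof
      show "C \<subseteq> E" using CE .
      show "E \<subseteq> C"
      proof
        fix e assume e: "e \<in> E"
        then obtain p q where pq: "e = {p, q}" "p \<in> V" using g graph_edgeE by metis
        then have "e \<in> {e\<in>E. p\<in>e}" using e by simp
        then show "e \<in> C" using loc[of p] VW pq by blast
      qed
    qed
  qed
  have "\<exists>!C. is_cycle V E C" using cycE uniq by (rule ex1I)
  then show ?thesis unfolding unicyclic_def using g con by simp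
qed

lemma switch_degree:
  assumes g: "graph V E" and I: "interchangeable E a b c d"
  shows "degree (two_switch E a b c d) z = degree E z"
proof -
  have ab: "{a,b}\<in>E" "{c,d}\<in>E" "{a,c}\<notin>E" "{b,d}\<notin>E" and dj: "{a,b}\<inter>{c,d}={}"
    using I unfolding interchangeable_def by auto
  have ne: "a\<noteq>b" "c\<noteq>d" using edge_ne[OF g ab(1)] edge_ne[OF g ab(2)] by auto
  have ne2: "a\<noteq>c" "a\<noteq>d" "b\<noteq>c" "b\<noteq>d" using dj by auto
  let ?S = "{e\<in>E. z\<in>e}"
  have fin: "finite ?S" using graph_finE[OF g] by simp
  have eq: "two_switch E a b c d = (E - {{a,b},{c,d}}) \<union> {{a,c},{b,d}}"
    using I by (simp add: two_switch_def)
  have key: "card (insert X (?S - {Y})) = card ?S" if "X \<notin> E" "Y \<in> ?S" for X Y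
  proof -
    have "card (insert X (?S - {Y})) = Suc (card (?S - {Y}))"
      using that fin by (simp add: card_insert_disjoint)
    also have "\<dots> = card ?S" using that fin
      by (metis card_Suc_Diff1)
    finally show ?thesis .
  qed
  consider "z=a" | "z=b" | "z=c" | "z=d" | "z\<notin>{a,b,c,d}" by auto
  then show ?thesis
  proof cases
    case 1
    then have f: "z \<notin> {c,d}" "z \<notin> {b,d}" "z \<in> {a,c}" "z \<in> {a,b}" using ne ne2 by auto
    have "{e \<in> two_switch E a b c d. z\<in>e} = insert {a,c} (?S - {{a,b}})"
      unfolding eq using f ab(3) by blast
    moreover have mem: "{a,b} \<in> ?S" using ab(1) f by simp
    ultimately show ?thesis unfolding degree_def using key[OF ab(3) mem] by simp
  next
    case 2
    then have f: "z \<notin> {c,d}" "z \<notin> {a,c}" "z \<in> {b,d}" "z \<in> {a,b}" using ne ne2 by auto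
    have "{e \<in> two_switch E a b c d. z\<in>e} = insert {b,d} (?S - {{a,b}})"
      unfolding eq using f ab(4) by blast
    moreover have mem: "{a,b} \<in> ?S" using ab(1) f by simp
    ultimately show ?thesis unfolding degree_def using key[OF ab(4) mem] by simp
  next
    case 3
    then have f: "z \<notin> {a,b}" "z \<notin> {b,d}" "z \<in> {a,c}" "z \<in> {c,d}" using ne ne2 by auto
    have "{e \<in> two_switch E a b c d. z\<in>e} = insert {a,c} (?S - {{c,d}})"
      unfolding eq using f ab(3) by blast
    moreover have mem: "{c,d} \<in> ?S" using ab(2) f by simp
    ultimately show ?thesis unfolding degree_def using key[OF ab(3) mem] by simp
  next
    case 4
    then have f: "z \<notin> {a,b}" "z \<notin> {a,c}" "z \<in> {b,d}" "z \<in> {c,d}" using ne ne2 by auto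
    have "{e \<in> two_switch E a b c d. z\<in>e} = insert {b,d} (?S - {{c,d}})"
      unfolding eq using f ab(4) by blast
    moreover have mem: "{c,d} \<in> ?S" using ab(2) f by simp
    ultimately show ?thesis unfolding degree_def using key[OF ab(4) mem] by simp
  next
    case 5
    then have "{e \<in> two_switch E a b c d. z\<in>e} = ?S"
      unfolding eq by blast
    then show ?thesis unfolding degree_def by simp
  qed
qed



definition other :: "'a set set \<Rightarrow> 'a \<Rightarrow> 'a \<Rightarrow> 'a" where
  "other E p c = (SOME y. {c, y} \<in> E \<and> y \<noteq> p)"

fun walk :: "'a set set \<Rightarrow> 'a \<Rightarrow> 'a \<Rightarrow> nat \<Rightarrow> 'a" where
  "walk E p c 0 = p"
| "walk E p c (Suc n) = walk E c (other E p c) n"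

lemma walk_SS: "walk E p c (Suc (Suc n)) = other E (walk E p c n) (walk E p c (Suc n))"
  by (induction n arbitrary: p c) auto

lemma other_prop:
  assumes cg: "cycle_graph V E" and pc: "{p, c} \<in> E"
  shows "{c, other E p c} \<in> E \<and> other E p c \<noteq> p \<and> nb E c = {p, other E p c}"
proof -
  have g: "graph V E" using cg by (simp add: cycle_graph_def)
  have cV: "c \<in> V" using edge_ne[OF g pc] by simp
  have "card (nb E c) = 2" using nb_card[OF cg cV] .
  then obtain y1 y2 where y12: "nb E c = {y1, y2}" "y1 \<noteq> y2" by (auto simp: card_2_iff)
  have pn: "p \<in> nb E c" using pc by (simp add: nb_def insert_commute)
  obtain y where y: "y \<noteq> p" "nb E c = {p, y}"
  proof (cases "p = y1")
    case True
    then show ?thesis using that[of y2] y12 by simp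
  next
    case False
    then have "p = y2" using pn y12 by auto
    then show ?thesis using that y12 by (auto simp: insert_commute)
  qed
  have "y \<in> nb E c" using y by simp
  then have ex: "\<exists>y. {c, y} \<in> E \<and> y \<noteq> p" using y unfolding nb_def by blast
  have o: "{c, other E p c} \<in> E \<and> other E p c \<noteq> p"
    unfolding other_def using someI_ex[OF ex] .
  then have "other E p c \<in> nb E c" by (simp add: nb_def)
  then have "other E p c = y" using y o by auto
  then show ?thesis using o y by simp
qed

lemma walk_edge:
  assumes cg: "cycle_graph V E"
  shows "{p, c} \<in> E \<Longrightarrow> {walk E p c i, walk E p c (Suc i)} \<in> E"
proof (induction i arbitrary: p c)
  case 0
  then show ?case by simp
next
  case (Suc i)
  have "{c, other E p c} \<in> E" using other_prop[OF cg Suc.prems] by simp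
  then show ?case using Suc.IH by simp
qed

lemma mod_Suc_lt: "(j::nat) < n \<Longrightarrow> Suc j mod n = (if Suc j = n then 0 else Suc j)"
  by (simp add: mod_Suc)

lemma adj_rtr_sym: "(adj E)\<^sup>*\<^sup>* p q \<Longrightarrow> (adj E)\<^sup>*\<^sup>* q p"
proof -
  assume h: "(adj E)\<^sup>*\<^sup>* p q"
  show ?thesis by (rule rtr_sym[OF _ h]) (simp add: adj_sym)
qed

theorem lemma3p7:
  fixes V :: "'a set" and E :: "'a set set" and u v :: 'a
  assumes "cycle_graph V E"
    and "u \<in> V" and "v \<in> V" and "u \<noteq> v" and "{u, v} \<notin> E"
  shows "\<exists>a b c d. u_switch V E a b c d \<and> {u, v} \<in> two_switch E a b c d"
proof -
  note cg = assms(1) and uV = assms(2) and vV = assms(3) and uv = assms(4) and uvE = assms(5)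
  have g: "graph V E" and con: "connected V E" and deg: "\<forall>x\<in>V. degree E x = 2"
    using cg by (auto simp: cycle_graph_def)
  have finV: "finite V" using g by (simp add: graph_def)
  have "card (nb E u) = 2" using nb_card[OF cg uV] .
  then have "nb E u \<noteq> {}" by (metis card.empty zero_neq_numeral)
  then obtain a where ua: "{u, a} \<in> E" by (auto simp: nb_def)
  define x where "x = walk E u a"
  have x0: "x 0 = u" and x1: "x (Suc 0) = a" by (simp_all add: x_def)
  have ed: "\<And>i. {x i, x (Suc i)} \<in> E" unfolding x_def using walk_edge[OF cg ua] .
  have inV: "\<And>i. x i \<in> V" using edge_ne[OF g ed] by blast
  have ne1: "\<And>i. x i \<noteq> x (Suc i)" using edge_ne[OF g ed] by blast
  have xSS: "\<And>i. x (Suc (Suc i)) = other E (x i) (x (Suc i))" unfolding x_def by (rule walk_SS)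
  have nbx: "\<And>i. nb E (x (Suc i)) = {x i, x (Suc (Suc i))}"
    using other_prop[OF cg ed] xSS by simp
  have ne2: "\<And>i. x (Suc (Suc i)) \<noteq> x i"
    using other_prop[OF cg ed] xSS by simp
  have nbI: "\<And>w y. {w, y} \<in> E \<Longrightarrow> y \<in> nb E w" by (simp add: nb_def)

  have backstep: "x i = x j" if "x (Suc i) = x (Suc j)" "x (Suc (Suc i)) = x (Suc (Suc j))" for i j
  proof -
    have "{x i, x (Suc (Suc i))} = {x j, x (Suc (Suc j))}" using nbx[of i] nbx[of j] that by simp
    then show ?thesis using ne2[of i] that(2) by (auto simp: doubleton_eq_iff)
  qed
  have shift: "x i = x (i + d) \<Longrightarrow> x (Suc i) = x (Suc (i + d)) \<Longrightarrow> x 0 = x d" for i d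
  proof (induction i)
    case 0 then show ?case by simp
  next
    case (Suc i)
    have "x i = x (i + d)" using backstep[of i "i + d"] Suc.prems by simp
    then show ?case using Suc.IH Suc.prems by simp
  qed
  have "\<exists>m>0. x m = u"
  proof -
    define f where "f i = (x i, x (Suc i))" for i
    define N where "N = card (V \<times> V)"
    have fin2: "finite (V \<times> V)" using finV by simp
    have sub: "f ` {0..N} \<subseteq> V \<times> V" using inV by (auto simp: f_def)
    have "\<not> inj_on f {0..N}"
    proof
      assume "inj_on f {0..N}"
      then have "card {0..N} \<le> card (V \<times> V)" using card_inj_on_le[OF _ sub fin2] by blast
      then show False by (simp add: N_def)
    qed
    then obtain i j where ij: "i \<noteq> j" "f i = f j" unfolding inj_on_def by blast
    have "\<exists>i j. i < j \<and> f i = f j"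
    proof (cases "i < j")
      case True then show ?thesis using ij by blast
    next
      case False then have "j < i" using ij by simp
      then show ?thesis using ij by metis
    qed
    then obtain i j where "i < j" "f i = f j" by blast
    then have "x i = x (i + (j - i))" "x (Suc i) = x (Suc (i + (j - i)))" by (auto simp: f_def)
    then have "x 0 = x (j - i)" by (rule shift)
    then show ?thesis using \<open>i < j\<close> x0 by (metis zero_less_diff)
  qed
  define n where "n = (LEAST m. 0 < m \<and> x m = u)"
  have n: "0 < n \<and> x n = u" unfolding n_def using LeastI_ex[OF \<open>\<exists>m>0. x m = u\<close>] .
  have nmin: "\<And>m. 0 < m \<Longrightarrow> x m = u \<Longrightarrow> n \<le> m" unfolding n_def by (simp add: Least_le)

  have noQ: "\<not> (\<exists>i<j. x i = x j)" if jn: "j < n" for j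
  proof
    assume Qj: "\<exists>i<j. x i = x j"
    define j0 where "j0 = (LEAST j. \<exists>i<j. x i = x j)"
    have Q0: "\<exists>i<j0. x i = x j0" unfolding j0_def
      by (rule LeastI[of "\<lambda>j. \<exists>i<j. x i = x j" j, OF Qj])
    have j0le: "j0 \<le> j" unfolding j0_def using Qj by (simp add: Least_le)
    have j0min: "\<And>j'. j' < j0 \<Longrightarrow> \<not> (\<exists>i<j'. x i = x j')"
      unfolding j0_def by (rule not_less_Least)
    obtain i where i: "i < j0" "x i = x j0" using Q0 by blast
    show False
    proof (cases i)
      case 0
      then have "x j0 = u" using i x0 by simp
      then have "n \<le> j0" using nmin i by simp
      then show False using j0le jn by simp
    next
      case (Suc i')
      have "j0 \<noteq> 0" using i by simp
      then obtain j1 where j1: "j0 = Suc j1" using not0_implies_Suc by blast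
      have "{x j0, x j1} \<in> E" using ed[of j1] j1 by (simp add: insert_commute)
      then have "x j1 \<in> nb E (x j0)" by (rule nbI)
      also have "nb E (x j0) = {x i', x (Suc i)}" using nbx[of i'] i Suc by simp
      finally have "x j1 = x i' \<or> x j1 = x (Suc i)" by simp
      then show False
      proof
        assume a0: "x j1 = x i'"
        have "i' < j1" using i Suc j1 by simp
        then have "\<exists>i<j1. x i = x j1" using a0 by auto
        moreover have "j1 < j0" using j1 by simp
        ultimately show False using j0min by blast
      next
        assume a1: "x j1 = x (Suc i)"
        consider "Suc i < j1" | "Suc i = j1" | "j1 \<le> i" by linarith
        then show False
        proof cases
          case 1
          then have "\<exists>i<j1. x i = x j1" using a1 by auto
          moreover have "j1 < j0" using j1 by simp
          ultimately show False using j0min by blast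
        next
          case 2 then show False using ne2[of i] i j1 by simp
        next
          case 3
          then have "i = j1" using i j1 by simp
          then show False using ne1[of i] a1 by simp
        qed
      qed
    qed
  qed
  have inj_n: "\<And>i j. i < n \<Longrightarrow> j < n \<Longrightarrow> x i = x j \<Longrightarrow> i = j"
  proof -
    fix i j assume "i < n" "j < n" "x i = x j"
    show "i = j"
    proof (rule linorder_cases[of i j])
      assume "i < j" then show ?thesis using noQ[of j] \<open>j < n\<close> \<open>x i = x j\<close> by blast
    next
      assume "i = j" then show ?thesis .
    next
      assume "j < i" then show ?thesis using noQ[of i] \<open>i < n\<close> \<open>x i = x j\<close> by auto
    qed
  qed
  have n3: "3 \<le> n"
  proof -
    have "n \<noteq> Suc 0" using n ne1[of 0] x0 by auto
    moreover have "n \<noteq> Suc (Suc 0)" using n ne2[of 0] x0 by auto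
    ultimately show ?thesis using n by linarith
  qed
  obtain n' where n': "n = Suc n'" using n by (metis gr0_implies_Suc)
  have xSn: "x (Suc n) = a"
  proof -
    have "a \<in> nb E (x n)" using ua n by (simp add: nb_def)
    then have "a = x n' \<or> a = x (Suc n)" using nbx[of n'] n' by simp
    moreover have "a \<noteq> x n'"
    proof
      assume "a = x n'"
      then have "n' = Suc 0" using inj_n[of n' "Suc 0"] x1 n' n3 by simp
      then show False using n' n3 by simp
    qed
    ultimately show ?thesis by simp
  qed
  have period: "x (i + n) = x i \<and> x (Suc i + n) = x (Suc i)" for i
  proof (induction i)
    case 0 then show ?case using n xSn x0 x1 by simp
  next
    case (Suc i)
    have "x (Suc (Suc i) + n) = x (Suc (Suc (i + n)))" by simp
    also have "\<dots> = other E (x (i + n)) (x (Suc (i + n)))" by (rule xSS)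
    also have "\<dots> = x (Suc (Suc i))" using Suc.IH xSS[of i] by simp
    finally show ?case using Suc.IH by simp
  qed
  have modx: "x i = x (i mod n)" for i
  proof (induction i rule: less_induct)
    case (less i)
    show ?case
    proof (cases "i < n")
      case True then show ?thesis by simp
    next
      case False
      then have "i = (i - n) + n" by simp
      then have "x i = x (i - n)" using period[of "i - n"] by metis
      also have "\<dots> = x ((i - n) mod n)" using less n False by simp
      also have "(i - n) mod n = i mod n" using False by (simp add: le_mod_geq)
      finally show ?thesis .
    qed
  qed
  have closure: "\<exists>j. y = x j" if "{x i, y} \<in> E" for i y
  proof -
    have yn: "y \<in> nb E (x i)" using that by (rule nbI)
    show ?thesis
    proof (cases i)
      case 0
      then have "y \<in> nb E (x n)" using yn n x0 by simp
      then show ?thesis using nbx[of n'] n' by auto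
    next
      case (Suc i')
      then show ?thesis using yn nbx[of i'] by auto
    qed
  qed
  have reach: "\<exists>j. y = x j" if "(adj E)\<^sup>*\<^sup>* u y" for y
    using that
  proof (induction rule: rtranclp_induct)
    case base then show ?case using x0 by metis
  next
    case (step y z)
    then obtain j where "y = x j" by blast
    then have "{x j, z} \<in> E" using step.hyps(2) by (simp add: adj_def)
    then show ?case by (rule closure)
  qed
  have range: "\<exists>j<n. y = x j" if "y \<in> V" for y
  proof -
    have "(adj E)\<^sup>*\<^sup>* u y" using con uV that by (simp add: connected_def)
    then obtain j where "y = x j" using reach by blast
    then have "y = x (j mod n)" using modx by simp
    moreover have "j mod n < n" using n by simp
    ultimately show ?thesis by blast
  qed
  obtain k where k: "k < n" "v = x k" using range vV by blast
  have k0: "k \<noteq> 0" using k x0 uv by (cases k) auto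
  have k1: "k \<noteq> Suc 0" using k x0 x1 uvE ed[of 0] by auto
  have kn: "k \<noteq> n'"
  proof
    assume "k = n'"
    then have "{v, u} \<in> E" using ed[of n'] k n n' by simp
    then show False using uvE by (simp add: insert_commute)
  qed
  have Sk: "Suc k < n" using k kn n' by simp

  define b where "b = x (Suc 0)"
  define d where "d = x (Suc k)"
  have ub: "{u, b} \<in> E" using ed[of 0] x0 b_def by simp
  have vd: "{v, d} \<in> E" using ed[of k] k d_def by simp
  have ud: "u \<noteq> d" using inj_n[of 0 "Suc k"] Sk n x0 d_def by auto
  have bv: "b \<noteq> v" using inj_n[of "Suc 0" k] k k1 n3 b_def by auto
  have bd: "b \<noteq> d" using inj_n[of "Suc 0" "Suc k"] Sk k0 n3 b_def d_def by auto
  have bdE: "{b, d} \<notin> E"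
  proof
    assume "{b, d} \<in> E"
    then have "d \<in> nb E (x (Suc 0))" using b_def by (simp add: nbI)
    then have "d = x 0 \<or> d = x (Suc (Suc 0))" using nbx[of 0] by simp
    then show False
    proof
      assume "d = x 0"
      then show False using inj_n[of 0 "Suc k"] Sk n d_def by auto
    next
      assume "d = x (Suc (Suc 0))"
      then show False using inj_n[of "Suc (Suc 0)" "Suc k"] Sk n3 k1 d_def by auto
    qed
  qed
  have I: "interchangeable E u b v d"
    unfolding interchangeable_def using ub vd uvE bdE uv ud bv bd by auto
  define E' where "E' = two_switch E u b v d"
  have E'eq: "E' = (E - {{u, b}, {v, d}}) \<union> {{u, v}, {b, d}}"
    unfolding E'_def two_switch_def using I by simp
  have uvE': "{u, v} \<in> E'" using E'eq by simp
  have bdE': "{b, d} \<in> E'" using E'eq by simp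

  have einj: "i = j" if "i < n" "j < n" "{x i, x (Suc i)} = {x j, x (Suc j)}" for i j
  proof -
    have "(x i = x j \<and> x (Suc i) = x (Suc j)) \<or> (x i = x (Suc j) \<and> x (Suc i) = x j)"
      using that(3) by (simp add: doubleton_eq_iff)
    then show ?thesis
    proof
      assume "x i = x j \<and> x (Suc i) = x (Suc j)"
      then show ?thesis using inj_n[OF that(1) that(2)] by blast
    next
      assume h: "x i = x (Suc j) \<and> x (Suc i) = x j"
      have m1: "Suc j mod n < n" "Suc i mod n < n" using n by simp_all
      have "x i = x (Suc j mod n)" using h modx[of "Suc j"] by simp
      then have e1: "i = Suc j mod n" using inj_n[OF that(1) m1(1)] by simp
      have "x j = x (Suc i mod n)" using h modx[of "Suc i"] by simp
      then have e2: "j = Suc i mod n" using inj_n[OF that(2) m1(2)] by simp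
      have s1: "Suc j mod n = (if Suc j = n then 0 else Suc j)" using mod_Suc_lt[OF that(2)] .
      have s2: "Suc i mod n = (if Suc i = n then 0 else Suc i)" using mod_Suc_lt[OF that(1)] .
      show ?thesis
      proof (cases "Suc j = n")
        case True
        then have "i = 0" using e1 s1 by simp
        then have "j = Suc 0 mod n" using e2 by simp
        also have "\<dots> = Suc 0" using n3 by simp
        finally show ?thesis using True n3 by simp
      next
        case False
        then have i: "i = Suc j" using e1 s1 by simp
        show ?thesis
        proof (cases "Suc i = n")
          case True
          then have "j = 0" using e2 s2 by simp
          then show ?thesis using True i n3 by simp
        next
          case False
          then have "j = Suc i" using e2 s2 by simp
          then show ?thesis using i by simp
        qed
      qed
    qed
  qed
  have edgeE': "{x j, x (Suc j)} \<in> E'" if "j < n" "j \<noteq> 0" "j \<noteq> k" for j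
  proof -
    have "{x j, x (Suc j)} \<noteq> {u, b}"
      using einj[of j 0] that n x0 b_def by auto
    moreover have "{x j, x (Suc j)} \<noteq> {v, d}"
      using einj[of j k] that k d_def by auto
    ultimately show ?thesis using ed[of j] E'eq by simp
  qed
  let ?R = "adj E'"
  have Rsym: "\<And>p q. ?R p q \<Longrightarrow> ?R q p" using adj_sym by metis
  have C1: "Suc 0 \<le> i \<Longrightarrow> i \<le> k \<Longrightarrow> ?R\<^sup>*\<^sup>* (x (Suc 0)) (x i)" for i
  proof (induction i)
    case 0 then show ?case by simp
  next
    case (Suc i)
    show ?case
    proof (cases "i = 0")
      case True then show ?thesis by simp
    next
      case False
      then have "?R\<^sup>*\<^sup>* (x (Suc 0)) (x i)" using Suc by simp
      moreover have "?R (x i) (x (Suc i))" unfolding adj_def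
        using edgeE'[of i] False Suc.prems k by simp
      ultimately show ?thesis by (rule rtranclp.rtrancl_into_rtrancl)
    qed
  qed
  have C2: "Suc k \<le> i \<Longrightarrow> i \<le> n \<Longrightarrow> ?R\<^sup>*\<^sup>* (x (Suc k)) (x i)" for i
  proof (induction i)
    case 0 then show ?case by simp
  next
    case (Suc i)
    show ?case
    proof (cases "i = k")
      case True then show ?thesis by simp
    next
      case False
      then have "?R\<^sup>*\<^sup>* (x (Suc k)) (x i)" using Suc by simp
      moreover have "?R (x i) (x (Suc i))" unfolding adj_def
        using edgeE'[of i] False Suc.prems k by simp
      ultimately show ?thesis by (rule rtranclp.rtrancl_into_rtrancl)
    qed
  qed
  have Ru1: "?R\<^sup>*\<^sup>* u (x (Suc 0))"
  proof -
    have "?R u v" using uvE' by (simp add: adj_def)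
    moreover have "?R\<^sup>*\<^sup>* v (x (Suc 0))"
      using adj_rtr_sym[OF C1[of k]] k k0 by simp
    ultimately show ?thesis by (rule converse_rtranclp_into_rtranclp)
  qed
  have R1k: "?R (x (Suc 0)) (x (Suc k))" using bdE' b_def d_def by (simp add: adj_def)
  have Ru: "?R\<^sup>*\<^sup>* u (x i)" if "i \<le> n" for i
  proof -
    consider "i = 0" | "Suc 0 \<le> i \<and> i \<le> k" | "Suc k \<le> i" by linarith
    then show ?thesis
    proof cases
      case 1 then show ?thesis using x0 by simp
    next
      case 2 then show ?thesis using Ru1 C1[of i] by (meson rtranclp_trans)
    next
      case 3
      have "?R\<^sup>*\<^sup>* u (x (Suc k))" using Ru1 R1k by (rule rtranclp.rtrancl_into_rtrancl)
      then show ?thesis using C2[of i] 3 that by (meson rtranclp_trans)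
    qed
  qed
  have conE': "connected V E'"
    unfolding connected_def
  proof (intro conjI ballI)
    show "V \<noteq> {}" using uV by blast
    fix y z assume "y \<in> V" "z \<in> V"
    then obtain i j where "i < n" "y = x i" "j < n" "z = x j" using range by metis
    then have "?R\<^sup>*\<^sup>* u y" "?R\<^sup>*\<^sup>* u z" using Ru by auto
    then have "?R\<^sup>*\<^sup>* y u" "?R\<^sup>*\<^sup>* u z" using adj_rtr_sym by auto
    then show "?R\<^sup>*\<^sup>* y z" by (rule rtranclp_trans)
  qed
  have gE': "graph V E'"
    unfolding graph_def
  proof (intro conjI ballI)
    show "finite V" using finV .
    fix e assume "e \<in> E'"
    then have "e \<in> E \<or> e = {u, v} \<or> e = {b, d}" using E'eq by blast
    then show "\<exists>x y. x \<noteq> y \<and> e = {x, y} \<and> x \<in> V \<and> y \<in> V"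
    proof (elim disjE)
      assume "e \<in> E" then show ?thesis using g graph_edgeE by metis
    next
      assume "e = {u, v}" then show ?thesis using uv uV vV by blast
    next
      assume "e = {b, d}" then show ?thesis using bd inV b_def d_def by blast
    qed
  qed
  have degE': "\<forall>z\<in>V. degree E' z = 2"
    using switch_degree[OF g I] deg unfolding E'_def by simp
  have cgE': "cycle_graph V E'" unfolding cycle_graph_def using gE' conE' degE' by simp
  have "E' \<noteq> E" using uvE' uvE by blast
  then have "u_switch V E u b v d"
    unfolding u_switch_def using cyc_unicyclic[OF cg] cyc_unicyclic[OF cgE'] E'_def by simp
  then show ?thesis using uvE' E'_def by blast
qed

end
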